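(* Let $\mathcal{G}^{\mathrm{los}}=(\mathcal{V},\mathcal{E}^{\mathrm{los}})$ be a finite undirected graph with vertex set partitioned into subgroups $\mathcal{V}_1,\dots,\mathcal{V}_M$, such that $\mathcal{G}^{\mathrm{los}}$ is connected and each induced subgraph $\mathcal{G}^{\mathrm{los}}[\mathcal{V}_m]$ is connected. Let each edge $(v_i,v_j)\in\mathcal{E}^{\mathrm{los}}$ carry a real weight $w^{\mathrm{d+los}}_{i,j}=w^{\mathrm{los}}_{i,j}+w^{\mathrm{d}}_{i,j}$, and define $w'_{i,j}=-\beta w^{\mathrm{d+los}}_{i,j}$ if $v_i,v_j$ lie in the same subgroup and $w'_{i,j}=-w^{\mathrm{d+los}}_{i,j}$ otherwise, where $\beta\gg1$ is chosen so that every intra-subgroup weight $w'_{i,j}$ is strictly smaller than every inter-subgroup weight $w'_{i',j'}$. Let $\bar{\mathcal{T}}$ (the ULOS-LCT) be a spanning tree of $\mathcal{G}^{\mathrm{los}}$ minimizing $\sum_{(v_i,v_j)\in\mathcal{E}(\mathcal{T})}w'_{i,j}$ over all spanning trees $\mathcal{T}$ of $\mathcal{G}^{\mathrm{los}}$. Then (i) $\bar{\mathcal{T}}$ is globally and subgroup LOS connected, i.e. it spans $\mathcal{V}$ and each induced subgraph $\bar{\mathcal{T}}[\mathcal{V}_m]$, $m=1,\dots,M$, is connected; and (ii) $\bar{\mathcal{T}}$ is least violated under the nominal controller among candidate trees, i.e. it minimizes $\sum_{(v_i,v_j)\in\mathcal{E}(\mathcal{T})}\big(-w^{\mathrm{d+los}}_{i,j}\big)$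 over all spanning trees $\mathcal{T}$ of $\mathcal{G}^{\mathrm{los}}$ for which every $\mathcal{T}[\mathcal{V}_m]$ is connected.
   Context: Interpretation: vertices are robots, edges are currently Line-of-Sight (LOS) connected pairs (within communication range and with unobstructed segment). The weights quantify, under the nominal task controller $\tilde{\mathbf u}$, how far the pairwise LOS constraints are from being violated (larger $w^{\mathrm{d+los}}_{i,j}$ = less violation). In the paper $w^{\mathrm{los}}_{i,j}=\frac1L\sum_{o=1}^L\big(\dot h^{\mathrm{los}}_{i,j,o}(\hat{\mathbf x},\mathbf x^{\mathrm{obs}},\tilde{\mathbf u})+\gamma h^{\mathrm{los}}_{i,j,o}(\hat{\mathbf x},\mathbf x^{\mathrm{obs}})\big)$ (average margin of the occlusion-free barrier constraints over $L$ obstacle points) and $w^{\mathrm{d}}_{i,j}$ is the margin $f^{\sigma^{\mathrm c}}_{i,j}-B^{\sigma^{\mathrm c}}_{i,j}\tilde{\mathbf u}$ of the linear probabilistic communication-distance constraints $B^{\sigma^{\mathrm c}}_{i,j}\mathbf u\le f^{\sigma^{\mathrm c}}_{i,j}$; the result only uses that each $w^{\mathrm{d+los}}_{i,j}$ is a real number. A graph is subgroup LOS connected if each of its induced subgraphs on $\mathcal{V}_m$ is connected. *)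

theory Defs
  imports Main "HOL.Real"
begin

definition simple_graph :: "'a set \<Rightarrow> 'a set set \<Rightarrow> bool" where
  "simple_graph V E \<longleftrightarrow> finite V \<and> (\<forall>e\<in>E. \<exists>u v. e = {u, v} \<and> u \<noteq> v \<and> u \<in> V \<and> v \<in> V)"

definition ind_connected :: "'a set set \<Rightarrow> 'a set \<Rightarrow> bool" where
  "ind_connected F S \<longleftrightarrow>
     (\<forall>u\<in>S. \<forall>v\<in>S. (u, v) \<in> {(x, y). x \<in> S \<and> y \<in> S \<and> {x, y} \<in> F}\<^sup>*)"

definition acyclic_edges :: "'a set set \<Rightarrow> bool" where
  "acyclic_edges F \<longleftrightarrow>
     (\<forall>u v. {u, v} \<in> F \<longrightarrow> u \<noteq> v \<longrightarrow>
        (u, v) \<notin> {(x, y). {x, y} \<in> F - {{u, v}}}\<^sup>*)"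

definition spanning_tree :: "'a set \<Rightarrow> 'a set set \<Rightarrow> 'a set set \<Rightarrow> bool" where
  "spanning_tree V E T \<longleftrightarrow> T \<subseteq> E \<and> ind_connected T V \<and> acyclic_edges T"

text \<open>Edge e joins two vertices of the same subgroup (subgroups = fibres of grp).\<close>
definition intra :: "('a \<Rightarrow> 'b) \<Rightarrow> 'a set \<Rightarrow> bool" where
  "intra grp e \<longleftrightarrow> (\<exists>u v. e = {u, v} \<and> grp u = grp v)"

definition wprime :: "('a \<Rightarrow> 'b) \<Rightarrow> real \<Rightarrow> ('a set \<Rightarrow> real) \<Rightarrow> 'a set \<Rightarrow> real" where
  "wprime grp \<beta> w e = (if intra grp e then - \<beta> * w e else - w e)"

end

theory Submission
  imports Defs
begin

definition er :: "'a set set \<Rightarrow> ('a \<times> 'a) set" where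
  "er F = {(x, y). {x, y} \<in> F}"

lemma er_iff[simp]: "(x, y) \<in> er F \<longleftrightarrow> {x, y} \<in> F"
  by (simp add: er_def)

lemma cn_sym: "(x, y) \<in> (er F)\<^sup>* \<Longrightarrow> (y, x) \<in> (er F)\<^sup>*"
proof -
  have "sym (er F)" by (auto simp: sym_def insert_commute)
  then have "sym ((er F)\<^sup>*)" by (rule sym_rtrancl)
  then show "(x, y) \<in> (er F)\<^sup>* \<Longrightarrow> (y, x) \<in> (er F)\<^sup>*" by (auto dest: symD)
qed

lemma cn_mono: "F \<subseteq> G \<Longrightarrow> (x, y) \<in> (er F)\<^sup>* \<Longrightarrow> (x, y) \<in> (er G)\<^sup>*"
proof -
  assume "F \<subseteq> G"
  then have "er F \<subseteq> er G" by (auto simp: er_def)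
  then show "(x, y) \<in> (er F)\<^sup>* \<Longrightarrow> (x, y) \<in> (er G)\<^sup>*" using rtrancl_mono by blast
qed

lemma cn_edge: "{x, y} \<in> F \<Longrightarrow> (x, y) \<in> (er F)\<^sup>*"
  by (simp add: r_into_rtrancl)

lemma decomp:
  assumes "(x, y) \<in> (er F)\<^sup>*"
  shows "(x, y) \<in> (er (F - {{a, b}}))\<^sup>* \<or>
         ((x, a) \<in> (er (F - {{a, b}}))\<^sup>* \<and> (b, y) \<in> (er (F - {{a, b}}))\<^sup>*) \<or>
         ((x, b) \<in> (er (F - {{a, b}}))\<^sup>* \<and> (a, y) \<in> (er (F - {{a, b}}))\<^sup>*)"
  using assms
proof (induction rule: rtrancl_induct)
  case base
  then show ?case by simp
next
  case (step y z)
  let ?G = "F - {{a, b}}"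
  show ?case
  proof (cases "{y, z} = {a, b}")
    case True
    then have "(y = a \<and> z = b) \<or> (y = b \<and> z = a)" by (auto simp: doubleton_eq_iff)
    then show ?thesis using step.IH by auto
  next
    case False
    then have "(y, z) \<in> er ?G" using step.hyps(2) by simp
    then show ?thesis using step.IH by (meson rtrancl.rtrancl_into_rtrancl)
  qed
qed

lemma cross:
  assumes "(a, b) \<in> r\<^sup>*" "a \<in> C" "b \<notin> C"
  shows "\<exists>p q. (p, q) \<in> r \<and> p \<in> C \<and> q \<notin> C"
proof (rule ccontr)
  assume H: "\<not> ?thesis"
  have "b \<in> C" using assms(1,2)
  proof (induction rule: rtrancl_induct)
    case base then show ?case by simp
  next
    case (step y z) then show ?case using H by blast
  qed
  then show False using assms(3) by simp
qed

definition edges_in :: "'a set \<Rightarrow> 'a set set \<Rightarrow> bool" where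
  "edges_in V F \<longleftrightarrow> (\<forall>f\<in>F. \<exists>u v. f = {u, v} \<and> u \<noteq> v \<and> u \<in> V \<and> v \<in> V)"

lemma ic_iff: "ind_connected F S \<longleftrightarrow> (\<forall>u\<in>S. \<forall>v\<in>S. (u, v) \<in> (er {f\<in>F. f \<subseteq> S})\<^sup>*)"
proof -
  have "{(x, y). x \<in> S \<and> y \<in> S \<and> {x, y} \<in> F} = er {f\<in>F. f \<subseteq> S}"
    by (auto simp: er_def)
  then show ?thesis unfolding ind_connected_def by simp
qed

lemma ic_V: "edges_in V F \<Longrightarrow> ind_connected F V \<longleftrightarrow> (\<forall>u\<in>V. \<forall>v\<in>V. (u, v) \<in> (er F)\<^sup>*)"
proof -
  assume "edges_in V F"
  then have "{f\<in>F. f \<subseteq> V} = F" by (auto simp: edges_in_def)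
  then show ?thesis by (simp add: ic_iff)
qed

lemma edges_finite: "finite V \<Longrightarrow> edges_in V F \<Longrightarrow> finite F"
proof -
  assume "finite V" "edges_in V F"
  then have "F \<subseteq> Pow V" by (auto simp: edges_in_def)
  then show "finite F" using \<open>finite V\<close> finite_subset by blast
qed

lemma edges_in_mono: "edges_in V F \<Longrightarrow> G \<subseteq> F \<Longrightarrow> edges_in V G"
  by (auto simp: edges_in_def)

lemma acyclic_subset: "F' \<subseteq> F \<Longrightarrow> acyclic_edges F \<Longrightarrow> acyclic_edges F'"
  unfolding acyclic_edges_def
proof (intro allI impI)
  fix u v
  assume "F' \<subseteq> F" "\<forall>u v. {u, v} \<in> F \<longrightarrow> u \<noteq> v \<longrightarrow> (u, v) \<notin> {(x, y). {x, y} \<in> F - {{u, v}}}\<^sup>*"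
    "{u, v} \<in> F'" "u \<noteq> v"
  then have "(u, v) \<notin> (er (F - {{u, v}}))\<^sup>*" by (auto simp: er_def)
  moreover have "F' - {{u, v}} \<subseteq> F - {{u, v}}" using \<open>F' \<subseteq> F\<close> by auto
  ultimately have "(u, v) \<notin> (er (F' - {{u, v}}))\<^sup>*" using cn_mono[of "F' - {{u, v}}" "F - {{u, v}}" u v] by blast
  then show "(u, v) \<notin> {(x, y). {x, y} \<in> F' - {{u, v}}}\<^sup>*" by (simp add: er_def)
qed

lemma acyc_er: "acyclic_edges F \<longleftrightarrow> (\<forall>u v. {u, v} \<in> F \<longrightarrow> u \<noteq> v \<longrightarrow> (u, v) \<notin> (er (F - {{u, v}}))\<^sup>*)"
  by (simp add: acyclic_edges_def er_def)

lemma L1: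
  assumes "finite F" "finite V" "r \<in> V" "\<forall>x\<in>V. (x, r) \<in> (er F)\<^sup>*"
  shows "card V \<le> card F + 1"
proof -
  let ?R = "er F"
  define d where "d x = (LEAST n. (x, r) \<in> ?R ^^ n)" for x
  have dI: "(x, r) \<in> ?R ^^ (d x)" if "(x, r) \<in> ?R ^^ n" for x n
    unfolding d_def using that by (rule LeastI)
  have dle: "d x \<le> n" if "(x, r) \<in> ?R ^^ n" for x n
    unfolding d_def using that by (rule Least_le)
  have ex: "\<exists>n. (x, r) \<in> ?R ^^ n" if "x \<in> V" for x
    using assms(4) that rtrancl_power by blast
  have d0: "x = r" if "d x = 0" "x \<in> V" for x
    using dI[of x] ex[OF that(2)] that(1) by auto
  define nxt where "nxt x = (SOME y. (x, y) \<in> ?R \<and> (y, r) \<in> ?R ^^ (d x - 1))" for x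
  have nxt: "(x, nxt x) \<in> ?R \<and> (nxt x, r) \<in> ?R ^^ (d x - 1)" if xV: "x \<in> V" "x \<noteq> r" for x
  proof -
    have "d x \<noteq> 0" using d0 xV by blast
    then obtain k where k: "d x = Suc k" using not0_implies_Suc by blast
    obtain n where "(x, r) \<in> ?R ^^ n" using ex[OF xV(1)] by blast
    then have "(x, r) \<in> ?R ^^ Suc k" using dI k by metis
    then obtain y where "(x, y) \<in> ?R" "(y, r) \<in> ?R ^^ k" using relpow_Suc_D2 by metis
    then have "\<exists>y. (x, y) \<in> ?R \<and> (y, r) \<in> ?R ^^ (d x - 1)" using k by auto
    then show ?thesis unfolding nxt_def by (rule someI_ex)
  qed
  have dn: "d (nxt x) = d x - 1" "d x > 0" if "x \<in> V" "x \<noteq> r" for x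
  proof -
    have a: "d (nxt x) \<le> d x - 1" using nxt[OF that] dle by blast
    have "(nxt x, r) \<in> ?R ^^ d (nxt x)" using nxt[OF that] dI by blast
    then have "(x, r) \<in> ?R ^^ Suc (d (nxt x))" using nxt[OF that] relpow_Suc_I2 by metis
    then have "d x \<le> Suc (d (nxt x))" using dle by blast
    then show "d (nxt x) = d x - 1" using a by linarith
    show "d x > 0" using d0 that by blast
  qed
  define g where "g x = {x, nxt x}" for x
  have inj: "inj_on g (V - {r})"
  proof (rule inj_onI)
    fix x y assume xy: "x \<in> V - {r}" "y \<in> V - {r}" "g x = g y"
    show "x = y"
    proof (rule ccontr)
      assume "x \<noteq> y"
      then have "x = nxt y" "y = nxt x" using xy(3) by (auto simp: g_def doubleton_eq_iff)
      then show False using dn[of x] dn[of y] xy(1,2) by auto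
    qed
  qed
  have img: "g ` (V - {r}) \<subseteq> F" using nxt by (auto simp: g_def)
  have "card (V - {r}) \<le> card F" using card_inj_on_le[OF inj img assms(1)] .
  then show ?thesis using assms(2,3) by auto
qed

lemma L2_aux:
  "card F = n \<Longrightarrow> finite V \<Longrightarrow> V \<noteq> {} \<Longrightarrow> edges_in V F \<Longrightarrow> acyclic_edges F \<Longrightarrow> card F + 1 \<le> card V"
proof (induction n arbitrary: F V rule: less_induct)
  case (less n)
  have finF: "finite F" using edges_finite less.prems by blast
  show ?case
  proof (cases "F = {}")
    case True
    then show ?thesis using less.prems by (simp add: Suc_leI card_gt_0_iff)
  next
    case False
    then obtain e where eF: "e \<in> F" by blast
    then obtain u v where e: "e = {u, v}" "u \<noteq> v" "u \<in> V" "v \<in> V"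
      using less.prems(4) by (auto simp: edges_in_def)
    define G where "G = F - {e}"
    have nuv: "(u, v) \<notin> (er G)\<^sup>*" using less.prems(5) eF e by (auto simp: acyc_er G_def)
    define S where "S = {x\<in>V. (u, x) \<in> (er G)\<^sup>*}"
    define F1 where "F1 = {f\<in>G. f \<subseteq> S}"
    define F2 where "F2 = {f\<in>G. f \<subseteq> V - S}"
    have SV: "S \<subseteq> V" by (auto simp: S_def)
    have GF: "G = F1 \<union> F2"
    proof
      show "G \<subseteq> F1 \<union> F2"
      proof
        fix f assume fG: "f \<in> G"
        have "f \<in> F" using fG by (simp add: G_def)
        then obtain a b where ab: "f = {a, b}" "a \<in> V" "b \<in> V"
          using less.prems(4) unfolding edges_in_def by blast
        have "{a, b} \<in> G" "{b, a} \<in> G" using fG ab by (auto simp: insert_commute)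
        then have e1: "(a, b) \<in> er G" "(b, a) \<in> er G" by simp_all
        have "a \<in> S \<longleftrightarrow> b \<in> S"
        proof
          assume "a \<in> S"
          then have "(u, a) \<in> (er G)\<^sup>*" by (simp add: S_def)
          then have "(u, b) \<in> (er G)\<^sup>*" using e1(1) by (rule rtrancl.rtrancl_into_rtrancl)
          then show "b \<in> S" using ab(3) by (simp add: S_def)
        next
          assume "b \<in> S"
          then have "(u, b) \<in> (er G)\<^sup>*" by (simp add: S_def)
          then have "(u, a) \<in> (er G)\<^sup>*" using e1(2) by (rule rtrancl.rtrancl_into_rtrancl)
          then show "a \<in> S" using ab(2) by (simp add: S_def)
        qed
        then show "f \<in> F1 \<union> F2" using fG ab by (auto simp: F1_def F2_def)
      qed
    qed (auto simp: F1_def F2_def)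
    have disj: "F1 \<inter> F2 = {}"
    proof -
      have "{} \<notin> F" using less.prems(4) by (auto simp: edges_in_def)
      show ?thesis
      proof (rule equals0I)
        fix f assume "f \<in> F1 \<inter> F2"
        then have f: "f \<in> F" "f \<subseteq> S" "f \<subseteq> V - S" by (auto simp: F1_def F2_def G_def)
        then have "f = {}" by blast
        then show False using f(1) \<open>{} \<notin> F\<close> by simp
      qed
    qed
    have finG: "finite G" using finF by (simp add: G_def)
    have cardG: "card G = card F1 + card F2"
      using GF disj finG by (metis card_Un_disjoint finite_Un)
    have cG: "card G = card F - 1" using eF finF by (simp add: G_def card_Diff_singleton)
    have cF0: "card F > 0" using eF finF card_gt_0_iff by blast
    have cardF: "card F = card G + 1" using cG cF0 by linarith
    have lt1: "card F1 < n" using cardF cardG less.prems(1) by linarith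
    have lt2: "card F2 < n" using cardF cardG less.prems(1) by linarith
    have ac1: "acyclic_edges F1" using acyclic_subset[OF _ less.prems(5)] by (auto simp: F1_def G_def)
    have ac2: "acyclic_edges F2" using acyclic_subset[OF _ less.prems(5)] by (auto simp: F2_def G_def)
    have ed1: "edges_in S F1" unfolding edges_in_def
    proof
      fix f assume "f \<in> F1"
      then have fF: "f \<in> F" "f \<subseteq> S" by (simp_all add: F1_def G_def)
      obtain a b where "f = {a, b}" "a \<noteq> b" using less.prems(4) fF(1) unfolding edges_in_def by blast
      then show "\<exists>u v. f = {u, v} \<and> u \<noteq> v \<and> u \<in> S \<and> v \<in> S" using fF(2) by blast
    qed
    have ed2: "edges_in (V - S) F2" unfolding edges_in_def
    proof
      fix f assume "f \<in> F2"
      then have fF: "f \<in> F" "f \<subseteq> (V - S)" by (simp_all add: F2_def G_def)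
      obtain a b where "f = {a, b}" "a \<noteq> b" using less.prems(4) fF(1) unfolding edges_in_def by blast
      then show "\<exists>u v. f = {u, v} \<and> u \<noteq> v \<and> u \<in> (V - S) \<and> v \<in> (V - S)" using fF(2) by blast
    qed
    have uS: "u \<in> S" using e by (auto simp: S_def)
    have vS: "v \<in> V - S" using e nuv by (auto simp: S_def)
    have finS: "finite S" using SV less.prems(2) finite_subset by blast
    have c1: "card F1 + 1 \<le> card S" using less.IH[OF lt1 refl finS _ ed1 ac1] uS by blast
    have c2: "card F2 + 1 \<le> card (V - S)"
      using less.IH[OF lt2 refl _ _ ed2 ac2] vS less.prems(2) by blast
    have "card V = card S + card (V - S)"
      using SV less.prems(2) by (metis card_Diff_subset finS card_mono le_add_diff_inverse)
    then show ?thesis using c1 c2 cardF cardG by linarith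
  qed
qed

lemma L2: "finite V \<Longrightarrow> V \<noteq> {} \<Longrightarrow> edges_in V F \<Longrightarrow> acyclic_edges F \<Longrightarrow> card F + 1 \<le> card V"
  using L2_aux by blast


lemma L3:
  assumes "finite V" "edges_in V F" "\<forall>x\<in>V. \<forall>y\<in>V. (x, y) \<in> (er F)\<^sup>*"
    "edges_in V T" "acyclic_edges T" "card F \<le> card T"
  shows "acyclic_edges F"
proof (rule ccontr)
  assume "\<not> acyclic_edges F"
  then obtain u v where uv: "{u, v} \<in> F" "u \<noteq> v" "(u, v) \<in> (er (F - {{u, v}}))\<^sup>*"
    by (auto simp: acyc_er)
  define G where "G = F - {{u, v}}"
  have sub: "er F \<subseteq> (er G)\<^sup>*"
  proof
    fix p assume "p \<in> er F"
    then obtain a b where p: "p = (a, b)" "{a, b} \<in> F" by (cases p) auto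
    show "p \<in> (er G)\<^sup>*"
    proof (cases "{a, b} = {u, v}")
      case True
      then have "(a = u \<and> b = v) \<or> (a = v \<and> b = u)" by (auto simp: doubleton_eq_iff)
      moreover have "(u, v) \<in> (er G)\<^sup>*" "(v, u) \<in> (er G)\<^sup>*"
        using uv(3) cn_sym[of u v G] by (simp_all add: G_def)
      ultimately show ?thesis using p by auto
    next
      case False
      then have "(a, b) \<in> er G" using p(2) by (simp add: G_def)
      then show ?thesis using p(1) by (simp add: r_into_rtrancl)
    qed
  qed
  have conn: "\<forall>x\<in>V. (x, u) \<in> (er G)\<^sup>*"
    using assms(3) sub uv(1) assms(2) unfolding edges_in_def
    by (metis (no_types, lifting) doubleton_eq_iff insertI1 rtrancl_subset_rtrancl subsetD)
  have uV: "u \<in> V" using uv(1) assms(2) unfolding edges_in_def by (metis doubleton_eq_iff)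
  have finF: "finite F" using edges_finite assms(1,2) by blast
  have "card V \<le> card G + 1" using L1[of G V u] finF assms(1) uV conn by (simp add: G_def)
  moreover have "card G + 1 = card F" using uv(1) finF unfolding G_def
    by (metis card_Diff1_less card_Diff_singleton card_gt_0_iff Suc_eq_plus1 Suc_pred' card_0_eq empty_iff)
  moreover have "card T + 1 \<le> card V" using L2 assms(1,4,5) uV by blast
  ultimately show False using assms(6) by linarith
qed

lemma intra_pair: "intra grp {x, y} \<longleftrightarrow> grp x = grp y"
  by (auto simp: intra_def doubleton_eq_iff)

lemma sep_lemma:
  assumes "finite G"
  shows "\<forall>F. {f\<in>F. \<not> intra grp f} = G \<longrightarrow> edges_in V F \<longrightarrow> acyclic_edges F \<longrightarrow>
    (p, z) \<in> (er F)\<^sup>* \<longrightarrow> (p, z) \<notin> (er {f\<in>F. intra grp f})\<^sup>* \<longrightarrow>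
    (\<exists>f\<in>F. \<not> intra grp f \<and> (p, z) \<notin> (er (F - {f}))\<^sup>*)"
  using assms
proof (induction rule: finite_induct)
  case empty
  show ?case
  proof (intro allI impI)
    fix F :: "'a set set"
    assume "{f\<in>F. \<not> intra grp f} = {}" "(p, z) \<in> (er F)\<^sup>*" "(p, z) \<notin> (er {f\<in>F. intra grp f})\<^sup>*"
    moreover have "{f\<in>F. intra grp f} = F" using calculation(1) by auto
    ultimately show "\<exists>f\<in>F. \<not> intra grp f \<and> (p, z) \<notin> (er (F - {f}))\<^sup>*" by simp
  qed
next
  case (insert f G)
  show ?case
  proof (intro allI impI)
    fix F :: "'a set set"
    assume H: "{f\<in>F. \<not> intra grp f} = insert f G" "edges_in V F" "acyclic_edges F"
      "(p, z) \<in> (er F)\<^sup>*" "(p, z) \<notin> (er {f\<in>F. intra grp f})\<^sup>*"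
    have fF: "f \<in> F" "\<not> intra grp f" using H(1) by auto
    show "\<exists>f\<in>F. \<not> intra grp f \<and> (p, z) \<notin> (er (F - {f}))\<^sup>*"
    proof (cases "(p, z) \<in> (er (F - {f}))\<^sup>*")
      case False
      then show ?thesis using fF by blast
    next
      case True
      define F' where "F' = F - {f}"
      have a1: "{g\<in>F'. \<not> intra grp g} = G" using H(1) insert.hyps(2) by (auto simp: F'_def)
      have a2: "edges_in V F'" using H(2) by (auto simp: F'_def edges_in_def)
      have a3: "acyclic_edges F'" using acyclic_subset[OF _ H(3)] by (auto simp: F'_def)
      have a4: "{g\<in>F'. intra grp g} = {g\<in>F. intra grp g}" using fF by (auto simp: F'_def)
      have a5: "(p, z) \<in> (er F')\<^sup>*" using True by (simp add: F'_def)
      have a6: "(p, z) \<notin> (er {g\<in>F'. intra grp g})\<^sup>*" using H(5) a4 by simp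
      obtain f' where f': "f' \<in> F'" "\<not> intra grp f'" "(p, z) \<notin> (er (F' - {f'}))\<^sup>*"
        using insert.IH[rule_format, OF a1 a2 a3 a5 a6] by blast
      obtain a b where ab: "f = {a, b}" "a \<noteq> b" using H(2) fF unfolding edges_in_def by blast
      obtain c d where cd: "f' = {c, d}" using a2 f' unfolding edges_in_def by blast
      define K where "K = F' - {f'}"
      have nab: "(a, b) \<notin> (er F')\<^sup>*" using H(3) fF ab by (auto simp: acyc_er F'_def)
      have cdF: "(c, d) \<in> er F'" using f' cd by simp
      have KF: "K \<subseteq> F'" by (auto simp: K_def)
      have "(p, z) \<notin> (er (F - {f'}))\<^sup>*"
      proof
        assume pz: "(p, z) \<in> (er (F - {f'}))\<^sup>*"
        have eq1: "F - {f'} - {{a, b}} = K" using ab by (auto simp: K_def F'_def)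
        have eq2: "F' - {{c, d}} = K" using cd by (auto simp: K_def)
        have D1: "((p, a) \<in> (er K)\<^sup>* \<and> (b, z) \<in> (er K)\<^sup>*) \<or> ((p, b) \<in> (er K)\<^sup>* \<and> (a, z) \<in> (er K)\<^sup>*)"
          using decomp[OF pz, of a b] eq1 f'(3) K_def by auto
        have D2: "((p, c) \<in> (er K)\<^sup>* \<and> (d, z) \<in> (er K)\<^sup>*) \<or> ((p, d) \<in> (er K)\<^sup>* \<and> (c, z) \<in> (er K)\<^sup>*)"
          using decomp[OF True[folded F'_def], of c d] eq2 f'(3) K_def by auto
        have tr: "(x, y) \<in> (er F')\<^sup>*" if "(x, y) \<in> (er K)\<^sup>*" for x y using cn_mono[OF KF that] .
        have cd2a: "(c, d) \<in> (er F')\<^sup>*" using cdF by (rule r_into_rtrancl)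
        have cd2: "(c, d) \<in> (er F')\<^sup>*" "(d, c) \<in> (er F')\<^sup>*" using cd2a cn_sym[OF cd2a] by simp_all
        have "(a, b) \<in> (er F')\<^sup>*"
          using D1 D2
        proof (elim disjE conjE)
          assume "(p, a) \<in> (er K)\<^sup>*" "(b, z) \<in> (er K)\<^sup>*" "(p, c) \<in> (er K)\<^sup>*" "(d, z) \<in> (er K)\<^sup>*"
          then have "(a, c) \<in> (er F')\<^sup>*" "(d, b) \<in> (er F')\<^sup>*" using tr cn_sym rtrancl_trans by metis+
          then show ?thesis using cd2 rtrancl_trans by metis
        next
          assume "(p, a) \<in> (er K)\<^sup>*" "(b, z) \<in> (er K)\<^sup>*" "(p, d) \<in> (er K)\<^sup>*" "(c, z) \<in> (er K)\<^sup>*"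
          then have "(a, d) \<in> (er F')\<^sup>*" "(c, b) \<in> (er F')\<^sup>*" using tr cn_sym rtrancl_trans by metis+
          then show ?thesis using cd2 rtrancl_trans by metis
        next
          assume "(p, b) \<in> (er K)\<^sup>*" "(a, z) \<in> (er K)\<^sup>*" "(p, c) \<in> (er K)\<^sup>*" "(d, z) \<in> (er K)\<^sup>*"
          then have "(a, d) \<in> (er F')\<^sup>*" "(c, b) \<in> (er F')\<^sup>*" using tr cn_sym rtrancl_trans by metis+
          then show ?thesis using cd2 rtrancl_trans by metis
        next
          assume "(p, b) \<in> (er K)\<^sup>*" "(a, z) \<in> (er K)\<^sup>*" "(p, d) \<in> (er K)\<^sup>*" "(c, z) \<in> (er K)\<^sup>*"
          then have "(a, c) \<in> (er F')\<^sup>*" "(d, b) \<in> (er F')\<^sup>*" using tr cn_sym rtrancl_trans by metis+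
          then show ?thesis using cd2 rtrancl_trans by metis
        qed
        then show False using nab by simp
      qed
      then show ?thesis using f' by (auto simp: F'_def)
    qed
  qed
qed


lemma tree_count:
  assumes "finite V" "V \<noteq> {}" "edges_in V T" "acyclic_edges T" "\<forall>x\<in>V. \<forall>y\<in>V. (x, y) \<in> (er T)\<^sup>*"
  shows "card T + 1 = card V"
proof -
  obtain r where r: "r \<in> V" using assms(2) by blast
  have "card V \<le> card T + 1" using L1[of T V r] edges_finite assms r by blast
  moreover have "card T + 1 \<le> card V" using L2 assms by blast
  ultimately show ?thesis by linarith
qed

lemma count_intra:
  assumes "finite V" "edges_in V T" "acyclic_edges T" "\<forall>m. ind_connected T {v\<in>V. grp v = m}"
  shows "card {f\<in>T. intra grp f} = (\<Sum>m\<in>grp ` V. card {v\<in>V. grp v = m} - 1)"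
proof -
  define Tm where "Tm m = {f\<in>T. f \<subseteq> {v\<in>V. grp v = m}}" for m
  have U: "{f\<in>T. intra grp f} = (\<Union>m\<in>grp ` V. Tm m)"
  proof
    show "{f\<in>T. intra grp f} \<subseteq> (\<Union>m\<in>grp ` V. Tm m)"
    proof
      fix f assume "f \<in> {f\<in>T. intra grp f}"
      then have fT: "f \<in> T" "intra grp f" by auto
      then obtain u v where uv: "f = {u, v}" "u \<in> V" "v \<in> V" using assms(2) unfolding edges_in_def by blast
      then have "grp u = grp v" using fT(2) intra_pair by metis
      then show "f \<in> (\<Union>m\<in>grp ` V. Tm m)" using uv fT(1) by (auto simp: Tm_def)
    qed
    show "(\<Union>m\<in>grp ` V. Tm m) \<subseteq> {f\<in>T. intra grp f}"
    proof
      fix f assume "f \<in> (\<Union>m\<in>grp ` V. Tm m)"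
      then obtain m where m: "f \<in> T" "f \<subseteq> {v\<in>V. grp v = m}" by (auto simp: Tm_def)
      then obtain u v where uv: "f = {u, v}" using assms(2) unfolding edges_in_def by blast
      then have "grp u = grp v" using m by auto
      then show "f \<in> {f\<in>T. intra grp f}" using uv m(1) intra_pair[of grp u v] by simp
    qed
  qed
  have finT: "finite T" using edges_finite assms(1,2) by blast
  have disj: "\<forall>m\<in>grp ` V. \<forall>m'\<in>grp ` V. m \<noteq> m' \<longrightarrow> Tm m \<inter> Tm m' = {}"
  proof (intro ballI impI)
    fix m m' assume "m \<in> grp ` V" "m' \<in> grp ` V" "m \<noteq> m'"
    have "{} \<notin> T" using assms(2) by (auto simp: edges_in_def)
    show "Tm m \<inter> Tm m' = {}"
    proof (rule equals0I)
      fix f assume "f \<in> Tm m \<inter> Tm m'"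
      then have f: "f \<in> T" "f \<subseteq> {v\<in>V. grp v = m}" "f \<subseteq> {v\<in>V. grp v = m'}" by (auto simp: Tm_def)
      have "f = {}"
      proof (rule equals0I)
        fix x assume "x \<in> f"
        then have "grp x = m" "grp x = m'" using f by auto
        then show False using \<open>m \<noteq> m'\<close> by simp
      qed
      then show False using f(1) \<open>{} \<notin> T\<close> by simp
    qed
  qed
  have cardm: "card (Tm m) = card {v\<in>V. grp v = m} - 1" if "m \<in> grp ` V" for m
  proof -
    let ?S = "{v\<in>V. grp v = m}"
    have "?S \<noteq> {}" using that by auto
    moreover have "finite ?S" using assms(1) by simp
    moreover have "edges_in ?S (Tm m)"
      unfolding edges_in_def
    proof
      fix f assume "f \<in> Tm m"
      then have fT: "f \<in> T" "f \<subseteq> ?S" by (simp_all add: Tm_def)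
      obtain u v where uv: "f = {u, v}" "u \<noteq> v" using assms(2) fT(1) unfolding edges_in_def by blast
      then show "\<exists>u v. f = {u, v} \<and> u \<noteq> v \<and> u \<in> ?S \<and> v \<in> ?S" using fT(2) by blast
    qed
    moreover have "acyclic_edges (Tm m)" using acyclic_subset[OF _ assms(3)] by (auto simp: Tm_def)
    moreover have "\<forall>x\<in>?S. \<forall>y\<in>?S. (x, y) \<in> (er (Tm m))\<^sup>*" unfolding Tm_def using assms(4)[rule_format, of m, unfolded ic_iff] .
    ultimately have "card (Tm m) + 1 = card ?S" using tree_count[of ?S "Tm m"] by blast
    then show ?thesis by linarith
  qed
  have "card {f\<in>T. intra grp f} = (\<Sum>m\<in>grp ` V. card (Tm m))"
    unfolding U
    by (rule card_UN_disjoint) (use assms(1) finT disj in \<open>auto simp: Tm_def\<close>)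
  also have "\<dots> = (\<Sum>m\<in>grp ` V. card {v\<in>V. grp v = m} - 1)"
    using cardm by (rule sum.cong[OF refl])
  finally show ?thesis .
qed

lemma mix:
  assumes sg: "simple_graph V E"
    and T: "spanning_tree V E T" "\<forall>m. ind_connected T {v\<in>V. grp v = m}"
    and T': "spanning_tree V E T'" "\<forall>m. ind_connected T' {v\<in>V. grp v = m}"
  shows "spanning_tree V E ({f\<in>T. intra grp f} \<union> {f\<in>T'. \<not> intra grp f})"
proof -
  define F where "F = {f\<in>T. intra grp f} \<union> {f\<in>T'. \<not> intra grp f}"
  have finV: "finite V" and eE: "edges_in V E" using sg by (auto simp: simple_graph_def edges_in_def)
  have TE: "T \<subseteq> E" "T' \<subseteq> E" using T(1) T'(1) by (auto simp: spanning_tree_def)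
  have eT: "edges_in V T" "edges_in V T'" "edges_in V F"
    using eE TE edges_in_mono by (auto simp: F_def edges_in_def)
  have FE: "F \<subseteq> E" using TE by (auto simp: F_def)
  have sub: "er T' \<subseteq> (er F)\<^sup>*"
  proof
    fix p assume "p \<in> er T'"
    then obtain x y where p: "p = (x, y)" "{x, y} \<in> T'" by (cases p) auto
    show "p \<in> (er F)\<^sup>*"
    proof (cases "intra grp {x, y}")
      case True
      then have g: "grp x = grp y" using intra_pair by metis
      have xy: "x \<in> V" "y \<in> V" using p(2) eT(2) unfolding edges_in_def by (metis doubleton_eq_iff)+
      let ?S = "{v\<in>V. grp v = grp x}"
      have "ind_connected T ?S" using T(2) by blast
      then have "\<forall>u\<in>?S. \<forall>v\<in>?S. (u, v) \<in> (er {f\<in>T. f \<subseteq> ?S})\<^sup>*" unfolding ic_iff .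
      moreover have "x \<in> ?S" "y \<in> ?S" using xy g by auto
      ultimately have "(x, y) \<in> (er {f\<in>T. f \<subseteq> ?S})\<^sup>*" by blast
      moreover have "{f\<in>T. f \<subseteq> ?S} \<subseteq> F"
      proof
        fix f assume f: "f \<in> {f\<in>T. f \<subseteq> ?S}"
        have fT: "f \<in> T" "f \<subseteq> ?S" using f by auto
        have "\<exists>u v. f = {u, v}" using eT(1) fT(1) unfolding edges_in_def by fast
        then obtain u v where uv: "f = {u, v}" by blast
        have "grp u = grp v" using fT(2) uv by auto
        then have "intra grp f" unfolding uv intra_def by blast
        then show "f \<in> F" using fT(1) by (simp add: F_def)
      qed
      ultimately show ?thesis using p(1) cn_mono[of "{f\<in>T. f \<subseteq> ?S}" F x y] by simp
    next
      case False
      then show ?thesis using p by (auto simp: F_def intro: r_into_rtrancl)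
    qed
  qed
  have connT': "\<forall>x\<in>V. \<forall>y\<in>V. (x, y) \<in> (er T')\<^sup>*" using T'(1) ic_V eT(2) by (auto simp: spanning_tree_def)
  have connF: "\<forall>x\<in>V. \<forall>y\<in>V. (x, y) \<in> (er F)\<^sup>*"
    using connT' sub by (meson rtrancl_subset_rtrancl subsetD)
  have acT: "acyclic_edges T" "acyclic_edges T'" using T(1) T'(1) by (auto simp: spanning_tree_def)
  have finT: "finite T" "finite T'" using edges_finite finV eT by blast+
  have ci: "card {f\<in>T. intra grp f} = card {f\<in>T'. intra grp f}"
    using count_intra[OF finV eT(1) acT(1) T(2)] count_intra[OF finV eT(2) acT(2) T'(2)] by simp
  have "card F = card {f\<in>T. intra grp f} + card {f\<in>T'. \<not> intra grp f}"
    unfolding F_def by (rule card_Un_disjoint) (use finT in auto)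
  also have "\<dots> = card {f\<in>T'. intra grp f} + card {f\<in>T'. \<not> intra grp f}" using ci by simp
  also have "\<dots> = card T'"
  proof -
    have "T' = {f\<in>T'. intra grp f} \<union> {f\<in>T'. \<not> intra grp f}" by auto
    then show ?thesis using finT(2) by (metis (no_types, lifting) card_Un_disjoint disjoint_iff finite_Un mem_Collect_eq)
  qed
  finally have "card F \<le> card T'" by simp
  then have "acyclic_edges F" using L3[OF finV eT(3) connF eT(2) acT(2)] by blast
  then show ?thesis using FE connF eT(3) ic_V unfolding F_def spanning_tree_def by blast
qed


lemma exch:
  assumes "\<forall>x\<in>V. \<forall>y\<in>V. (x, y) \<in> (er F)\<^sup>*" "{c, d} \<in> F" "(p, q) \<in> (er F)\<^sup>*"
    "(p, q) \<notin> (er (F - {{c, d}}))\<^sup>*"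
  shows "\<forall>x\<in>V. \<forall>y\<in>V. (x, y) \<in> (er (insert {p, q} (F - {{c, d}})))\<^sup>*"
proof -
  define F' where "F' = insert {p, q} (F - {{c, d}})"
  have mono: "(x, y) \<in> (er F')\<^sup>*" if "(x, y) \<in> (er (F - {{c, d}}))\<^sup>*" for x y
    using cn_mono[OF _ that, of F'] by (auto simp: F'_def)
  have pq: "(p, q) \<in> (er F')\<^sup>*" "(q, p) \<in> (er F')\<^sup>*"
    by (auto simp: F'_def insert_commute intro: r_into_rtrancl)
  have cd: "(c, d) \<in> (er F')\<^sup>*"
    using decomp[OF assms(3), of c d] assms(4)
  proof (elim disjE conjE)
    assume h1: "(p, c) \<in> (er (F - {{c, d}}))\<^sup>*" and h2: "(d, q) \<in> (er (F - {{c, d}}))\<^sup>*"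
    have "(c, p) \<in> (er F')\<^sup>*" using mono[OF cn_sym[OF h1]] .
    moreover have "(q, d) \<in> (er F')\<^sup>*" using mono[OF cn_sym[OF h2]] .
    ultimately show ?thesis using pq rtrancl_trans by metis
  next
    assume h1: "(p, d) \<in> (er (F - {{c, d}}))\<^sup>*" and h2: "(c, q) \<in> (er (F - {{c, d}}))\<^sup>*"
    have "(c, q) \<in> (er F')\<^sup>*" using mono[OF h2] .
    moreover have "(p, d) \<in> (er F')\<^sup>*" using mono[OF h1] .
    ultimately show ?thesis using pq rtrancl_trans by metis
  qed simp
  have sub: "er F \<subseteq> (er F')\<^sup>*"
  proof
    fix z assume "z \<in> er F"
    then obtain x y where z: "z = (x, y)" "{x, y} \<in> F" by (cases z) auto
    show "z \<in> (er F')\<^sup>*"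
    proof (cases "{x, y} = {c, d}")
      case True
      then have "(x = c \<and> y = d) \<or> (x = d \<and> y = c)" by (auto simp: doubleton_eq_iff)
      moreover have "(d, c) \<in> (er F')\<^sup>*" using cn_sym[OF cd] .
      ultimately show ?thesis using cd z(1) by auto
    next
      case False
      then have "(x, y) \<in> er F'" using z(2) by (simp add: F'_def)
      then show ?thesis using z(1) by (simp add: r_into_rtrancl)
    qed
  qed
  show ?thesis using assms(1) sub unfolding F'_def[symmetric]
    by (meson rtrancl_subset_rtrancl subsetD)
qed

lemma split_sum:
  assumes "finite X"
  shows "(\<Sum>e\<in>X. wprime grp \<beta> w e) =
     \<beta> * (\<Sum>e\<in>{f\<in>X. intra grp f}. - w e) + (\<Sum>e\<in>{f\<in>X. \<not> intra grp f}. - w e)"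
    "(\<Sum>e\<in>X. - w e) = (\<Sum>e\<in>{f\<in>X. intra grp f}. - w e) + (\<Sum>e\<in>{f\<in>X. \<not> intra grp f}. - w e)"
proof -
  have X: "X = {f\<in>X. intra grp f} \<union> {f\<in>X. \<not> intra grp f}" by auto
  have s: "(\<Sum>e\<in>X. g e) = (\<Sum>e\<in>{f\<in>X. intra grp f}. g e) + (\<Sum>e\<in>{f\<in>X. \<not> intra grp f}. g e)"
    for g :: "'a set \<Rightarrow> real"
    by (subst X, rule sum.union_disjoint) (use assms in auto)
  have a: "(\<Sum>e\<in>{f\<in>X. intra grp f}. wprime grp \<beta> w e) = \<beta> * (\<Sum>e\<in>{f\<in>X. intra grp f}. - w e)"
    by (simp add: sum_distrib_left wprime_def)
  have b: "(\<Sum>e\<in>{f\<in>X. \<not> intra grp f}. wprime grp \<beta> w e) = (\<Sum>e\<in>{f\<in>X. \<not> intra grp f}. - w e)"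
    by (rule sum.cong) (auto simp: wprime_def)
  show "(\<Sum>e\<in>X. wprime grp \<beta> w e) =
     \<beta> * (\<Sum>e\<in>{f\<in>X. intra grp f}. - w e) + (\<Sum>e\<in>{f\<in>X. \<not> intra grp f}. - w e)"
    using s a b by simp
  show "(\<Sum>e\<in>X. - w e) = (\<Sum>e\<in>{f\<in>X. intra grp f}. - w e) + (\<Sum>e\<in>{f\<in>X. \<not> intra grp f}. - w e)"
    by (rule s)
qed

theorem theorem5:
  fixes V :: "'a set" and E :: "'a set set" and grp :: "'a \<Rightarrow> 'b"
    and w :: "'a set \<Rightarrow> real" and \<beta> :: real and Tb :: "'a set set"
  assumes graph: "simple_graph V E"
    and conn: "ind_connected E V"
    and sub_conn: "\<forall>m. ind_connected E {v \<in> V. grp v = m}"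
    and beta: "\<beta> > 1"
    and sep: "\<forall>e\<in>E. \<forall>e'\<in>E. intra grp e \<longrightarrow> \<not> intra grp e' \<longrightarrow>
                wprime grp \<beta> w e < wprime grp \<beta> w e'"
    and Tb_tree: "spanning_tree V E Tb"
    and Tb_min: "\<forall>T. spanning_tree V E T \<longrightarrow>
                   (\<Sum>e\<in>Tb. wprime grp \<beta> w e) \<le> (\<Sum>e\<in>T. wprime grp \<beta> w e)"
  shows "(ind_connected Tb V \<and> (\<forall>m. ind_connected Tb {v \<in> V. grp v = m}))
       \<and> (\<forall>T. spanning_tree V E T \<and> (\<forall>m. ind_connected T {v \<in> V. grp v = m}) \<longrightarrow>
              (\<Sum>e\<in>Tb. - w e) \<le> (\<Sum>e\<in>T. - w e))"
proof -
  have finV: "finite V" and eE: "edges_in V E" using graph by (auto simp: simple_graph_def edges_in_def)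
  have TbE: "Tb \<subseteq> E" and icTb: "ind_connected Tb V" and acTb: "acyclic_edges Tb"
    using Tb_tree by (auto simp: spanning_tree_def)
  have eTb: "edges_in V Tb" using edges_in_mono[OF eE TbE] .
  have finTb: "finite Tb" using edges_finite[OF finV eTb] .
  have connTb: "\<forall>x\<in>V. \<forall>y\<in>V. (x, y) \<in> (er Tb)\<^sup>*" using icTb ic_V[OF eTb] by blast
  have subTb: "\<forall>m. ind_connected Tb {v \<in> V. grp v = m}"
  proof (rule ccontr)
    assume "\<not> ?thesis"
    then obtain m where "\<not> ind_connected Tb {v \<in> V. grp v = m}" by blast
    then obtain a b where ab: "a \<in> V" "grp a = m" "b \<in> V" "grp b = m"
      "(a, b) \<notin> (er {f\<in>Tb. f \<subseteq> {v \<in> V. grp v = m}})\<^sup>*"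
      unfolding ic_iff by blast
    let ?I = "{f\<in>Tb. intra grp f}"
    have stay: "z \<in> V \<and> grp z = m \<and> (a, z) \<in> (er {f\<in>Tb. f \<subseteq> {v \<in> V. grp v = m}})\<^sup>*"
      if "(a, z) \<in> (er ?I)\<^sup>*" for z
      using that
    proof (induction rule: rtrancl_induct)
      case base then show ?case using ab by simp
    next
      case (step y z)
      have yz: "{y, z} \<in> Tb" "grp y = grp z" using step.hyps(2) intra_pair[of grp y z] by auto
      then have "z \<in> V" using eTb unfolding edges_in_def by (metis doubleton_eq_iff)
      moreover have "{y, z} \<in> {f\<in>Tb. f \<subseteq> {v \<in> V. grp v = m}}" using yz step.IH \<open>z \<in> V\<close> by auto
      then have "(y, z) \<in> er {f\<in>Tb. f \<subseteq> {v \<in> V. grp v = m}}" by simp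
      then have "(a, z) \<in> (er {f\<in>Tb. f \<subseteq> {v \<in> V. grp v = m}})\<^sup>*"
        using step.IH by (meson rtrancl.rtrancl_into_rtrancl)
      moreover have "grp z = m" using yz(2) step.IH by simp
      ultimately show ?case using \<open>z \<in> V\<close> by simp
    qed
    define C where "C = {z. (a, z) \<in> (er ?I)\<^sup>*}"
    have aC: "a \<in> C" by (simp add: C_def)
    have bC: "b \<notin> C" using stay ab(5) by (auto simp: C_def)
    have "(a, b) \<in> (er {f\<in>E. f \<subseteq> {v \<in> V. grp v = m}})\<^sup>*"
      using sub_conn ab unfolding ic_iff by blast
    then have "\<exists>p q. (p, q) \<in> er {f\<in>E. f \<subseteq> {v \<in> V. grp v = m}} \<and> p \<in> C \<and> q \<notin> C"
      using aC bC by (rule cross)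
    then obtain p q where pq: "(p, q) \<in> er {f\<in>E. f \<subseteq> {v \<in> V. grp v = m}}" "p \<in> C" "q \<notin> C"
      by blast
    have pqE: "{p, q} \<in> E" "p \<in> V" "q \<in> V" "grp p = m" "grp q = m" using pq(1) by auto
    have intra_e: "intra grp {p, q}" using pqE intra_pair by metis
    have ap: "(a, p) \<in> (er ?I)\<^sup>*" using pq(2) by (simp add: C_def)
    have nI: "(p, q) \<notin> (er ?I)\<^sup>*"
      using ap pq(3) by (auto simp: C_def intro: rtrancl_trans)
    have eNT: "{p, q} \<notin> Tb"
    proof
      assume "{p, q} \<in> Tb"
      then have "(p, q) \<in> (er ?I)\<^sup>*" using intra_e by (auto intro: r_into_rtrancl)
      then show False using nI by simp
    qed
    have cpq: "(p, q) \<in> (er Tb)\<^sup>*" using connTb pqE by blast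
    have finO: "finite {f\<in>Tb. \<not> intra grp f}" using finTb by simp
    obtain f where f: "f \<in> Tb" "\<not> intra grp f" "(p, q) \<notin> (er (Tb - {f}))\<^sup>*"
      using sep_lemma[OF finO, of grp V p q] eTb acTb cpq nI by blast
    obtain c d where cd: "f = {c, d}" using f(1) eTb unfolding edges_in_def by blast
    define T' where "T' = insert {p, q} (Tb - {f})"
    have T'E: "T' \<subseteq> E" using TbE pqE by (auto simp: T'_def)
    have eT': "edges_in V T'" using edges_in_mono[OF eE T'E] .
    have connT': "\<forall>x\<in>V. \<forall>y\<in>V. (x, y) \<in> (er T')\<^sup>*"
      using exch[OF connTb f(1)[unfolded cd] cpq f(3)[unfolded cd]] cd by (simp add: T'_def)
    have "card Tb > 0" using f(1) finTb card_gt_0_iff by blast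
    then have cardT': "card T' = card Tb" using eNT f(1) finTb by (simp add: T'_def)
    have acT': "acyclic_edges T'" using L3[OF finV eT' connT' eTb acTb] cardT' by simp
    have stT': "spanning_tree V E T'"
      unfolding spanning_tree_def using T'E acT' connT' ic_V[OF eT'] by blast
    have "(\<Sum>e\<in>T'. wprime grp \<beta> w e) = wprime grp \<beta> w {p, q} + (\<Sum>e\<in>Tb - {f}. wprime grp \<beta> w e)"
      using eNT finTb by (simp add: T'_def)
    also have "\<dots> = wprime grp \<beta> w {p, q} + (\<Sum>e\<in>Tb. wprime grp \<beta> w e) - wprime grp \<beta> w f"
      using f(1) finTb by (simp add: sum_diff1)
    also have "\<dots> < (\<Sum>e\<in>Tb. wprime grp \<beta> w e)"
      using sep pqE(1) intra_e f(1,2) TbE by fastforce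
    finally show False using Tb_min stT' by fastforce
  qed
  have part2: "(\<Sum>e\<in>Tb. - w e) \<le> (\<Sum>e\<in>T. - w e)"
    if T: "spanning_tree V E T" "\<forall>m. ind_connected T {v \<in> V. grp v = m}" for T
  proof -
    have TE: "T \<subseteq> E" using T(1) by (auto simp: spanning_tree_def)
    have finT: "finite T" using edges_finite[OF finV edges_in_mono[OF eE TE]] .
    define T1 where "T1 = {f\<in>T. intra grp f} \<union> {f\<in>Tb. \<not> intra grp f}"
    define T2 where "T2 = {f\<in>Tb. intra grp f} \<union> {f\<in>T. \<not> intra grp f}"
    have st1: "spanning_tree V E T1" unfolding T1_def using mix[OF graph T Tb_tree subTb] .
    have st2: "spanning_tree V E T2" unfolding T2_def using mix[OF graph Tb_tree subTb T] .
    have fin1: "finite T1" "finite T2" using finT finTb by (auto simp: T1_def T2_def)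
    have i1: "{f\<in>T1. intra grp f} = {f\<in>T. intra grp f}" "{f\<in>T1. \<not> intra grp f} = {f\<in>Tb. \<not> intra grp f}"
      by (auto simp: T1_def)
    have i2: "{f\<in>T2. intra grp f} = {f\<in>Tb. intra grp f}" "{f\<in>T2. \<not> intra grp f} = {f\<in>T. \<not> intra grp f}"
      by (auto simp: T2_def)
    define ATb where "ATb = (\<Sum>e\<in>{f\<in>Tb. intra grp f}. - w e)"
    define BTb where "BTb = (\<Sum>e\<in>{f\<in>Tb. \<not> intra grp f}. - w e)"
    define AT where "AT = (\<Sum>e\<in>{f\<in>T. intra grp f}. - w e)"
    define BT where "BT = (\<Sum>e\<in>{f\<in>T. \<not> intra grp f}. - w e)"
    have "\<beta> * ATb + BTb \<le> \<beta> * AT + BTb"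
      using Tb_min[rule_format, OF st1] split_sum(1)[OF finTb, of grp \<beta> w] split_sum(1)[OF fin1(1), of grp \<beta> w] i1
      unfolding ATb_def BTb_def AT_def by simp
    then have A: "ATb \<le> AT" using beta by simp
    have "\<beta> * ATb + BTb \<le> \<beta> * ATb + BT"
      using Tb_min[rule_format, OF st2] split_sum(1)[OF finTb, of grp \<beta> w] split_sum(1)[OF fin1(2), of grp \<beta> w] i2
      unfolding ATb_def BTb_def BT_def by simp
    then have B: "BTb \<le> BT" by simp
    show ?thesis using A B split_sum(2)[OF finTb, of w grp] split_sum(2)[OF finT, of w grp]
      unfolding ATb_def BTb_def AT_def BT_def by simp
  qed
  show ?thesis using icTb subTb part2 by blast
qed

end
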